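(* Let $w\in\mathbb{Q}^{V_+}_{\ge0}$, $b\in\mathbb{Z}^{V_+}_{\ge0}$, $\emptyset\ne S\subseteq V_+$ and $k'\in\mathbb{Z}_{>0}$, and assume $k_\xi(S)-k'\le b(S)$ for every $\xi\in[N]$. For each $\xi$, write $S=\{v_1,\dots,v_\ell\}$ with $w_{v_1}\le\dots\le w_{v_\ell}$, let $j\in[\ell]$ be the smallest index with $k_\xi(S)-k'\le\sum_{i\in[j]}b_{v_i}$, and set $\bar\alpha^\xi_S=\mathbb{I}(k_\xi(S)>k')\,w_{v_j}$ and $\bar\beta^\xi_v=\mathbb{I}(v\in\{v_1,\dots,v_{j-1}\})(w_v-w_{v_j})$ for $v\in V_+$. Define $\hat\alpha^\xi_{S'}=\mathbb{I}(S'=S)\,p_\xi\bar\alpha^\xi_S$ for all $\emptyset\ne S'\subseteq V_+$, $\xi\in[N]$, and $\hat\beta^\xi_v=p_\xi\bar\beta^\xi_v$. Then $(\hat\alpha,\hat\beta)\in\mathcal{A}$, and for every $\bar x\in\{x\in\mathcal{X}:x(E(S))\le|S|-k'\}$ every $\theta\in\operatorname{proj}_\theta(\Gamma(\bar x,\hat\alpha,\hat\beta))$ satisfies $$\theta(S)\ge\mathcal{L}^*(S,k')\cdot\big(1+\bar x(E(S))-|S|+k'\big).$$ In particular, if $x(E(S))\le|S|-k'$ is valid for $\mathcal{P}$, then the inequality $\theta(S)\ge\mathcal{L}^*(S,k')(1+x(E(S))-|S|+k')$ (with $x$ free) is valid for $\mathcal{P}$.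
   Context: $G=(V,E)$ complete undirected graph, $V=\{0\}\cup V_+$ ($V_+$ customers), edge costs $c\in\mathbb{Q}^E_{\ge0}$; capacity $C>0$; scenarios $\xi\in[N]$ with demands $d^\xi\in\mathbb{Q}^{V_+}_{\ge0}$ ($d^\xi(v)\le C$) and probabilities $p_\xi\ge0$, $\sum_\xi p_\xi=1$. $f(S)=\sum_{i\in S}f(i)$; $k_\xi(S)=\lceil d^\xi(S)/C\rceil$; $\bar d=\sum_\xi p_\xi d^\xi$; $\mathbb{I}$ is the indicator; $E(S)$ edges with both ends in $S$, $\delta(S)$ edges with exactly one end in $S$. $\mathcal{X}$ is one of $\mathcal{X}_{\mathrm{sub}}=\{x\in[0,2]^E: x(\delta(v))=2\ \forall v\in V_+,\ x(E(S))\le|S|-1\ \forall\emptyset\ne S\subseteq V_+\}$ or $\mathcal{X}_{\mathrm{cvrp}}=\mathcal{X}_{\mathrm{sub}}\cap\{x:x(\delta(0))=2k,\ x(E(S))\le|S|-\lceil\bar d(S)/C\rceil\ \forall \emptyset\ne S\subseteq V_+\}$ ($k$ a given positive integer). Vectors $y\in\mathbb{R}^{[N]\times V_+}$ have entries $y^\xi_v$; $[\mathbf 0,b]^N=\{y:0\le y^\xi_v\le b_v\}$. Multipliers: $\alpha=(\alpha^\xi_S)_{\xi\in[N],\emptyset\ne S\subseteq V_+}\ge0$, $\beta=(\beta^\xi_v)\le0$. Define $\nu(\alpha,\beta)=\sum_\xi\sum_S\alpha^\xi_S(k_\xi(S)-|S|)+\sum_\xi\sum_{v}\beta^\xi_v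 b_v$. $\mathcal{A}$ is the set of $(\alpha,\beta)$ with $\alpha\ge0$, $\beta\le0$ and $\beta^\xi_v+\sum_{S\ni v}\alpha^\xi_S\le0$ for all $\xi$ and all $v$ with $w_v=0$. For $\bar x\in\mathcal{X}$, $\Gamma(\bar x,\alpha,\beta)$ is the set of $(\theta,y)\in\mathbb{R}^{V_+}_{\ge0}\times[\mathbf 0,b]^N$ with $\sum_\xi\sum_v(\beta^\xi_v+\sum_{S\ni v}\alpha^\xi_S)y^\xi_v\ge\sum_\xi\sum_S\alpha^\xi_S\bar x(E(S))+\nu(\alpha,\beta)$ and $\theta_v\ge\sum_\xi p_\xi w_v y^\xi_v$ for all $v\in V_+$; $\operatorname{proj}_\theta$ is its projection onto $\theta$. $\mathcal{P}=\{(x,\theta):x\in\mathcal{X},\ \theta\in\operatorname{proj}_\theta(\widehat{\mathrm{SRI}}(x))\}$, where $\widehat{\mathrm{SRI}}(x)$ is the set of $(\theta,y)\in\mathbb{R}^{V_+}_{\ge0}\times[\mathbf 0,b]^N$ with $y^\xi(S)\ge k_\xi(S)+x(E(S))-|S|$ for all $\emptyset\ne S\subseteq V_+$, $\xi\in[N]$, and $\theta_v\ge\sum_\xi p_\xi w_v y^\xi_v$ for all $v$. Finally $\mathcal{L}^*(S,k')=\sum_\xi p_\xi\mathcal{L}^*_\xi(S,k')$ where $\mathcal{L}^*_\xi(S,k')=\min\{\sum_{v\in V_+}w_vy_v: y(S)\ge k_\xi(S)-k',\ y_v\le b_v\ \forall v\in V_+,\ y\ge0\}$. *)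

theory Defs
  imports "HOL-Analysis.Analysis"
begin

(* Vertices have type 'v; the depot is dep, the customers Vp, V = insert dep Vp.
   Edges of the complete undirected graph on a vertex set are its 2-element subsets.
   Scenarios are indexed by {1..N}. *)

definition edges :: "'v set \<Rightarrow> 'v set set" where
  "edges A = {e. e \<subseteq> A \<and> card e = 2}"

definition xE :: "('v set \<Rightarrow> real) \<Rightarrow> 'v set \<Rightarrow> real" where
  "xE x S = sum x (edges S)"

definition xdelta :: "'v set \<Rightarrow> ('v set \<Rightarrow> real) \<Rightarrow> 'v \<Rightarrow> real" where
  "xdelta V x v = sum x {e \<in> edges V. v \<in> e}"

definition subsets :: "'v set \<Rightarrow> 'v set set" where
  "subsets Vp = {S. S \<subseteq> Vp \<and> S \<noteq> {}}"

definition kxi :: "real \<Rightarrow> (nat \<Rightarrow> 'v \<Rightarrow> real) \<Rightarrow> nat \<Rightarrow> 'v set \<Rightarrow> int" where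
  "kxi C d \<xi> S = \<lceil>sum (d \<xi>) S / C\<rceil>"

definition dbar :: "nat \<Rightarrow> (nat \<Rightarrow> real) \<Rightarrow> (nat \<Rightarrow> 'v \<Rightarrow> real) \<Rightarrow> 'v set \<Rightarrow> real" where
  "dbar N p d S = (\<Sum>\<xi>\<in>{1..N}. p \<xi> * sum (d \<xi>) S)"

definition X_sub :: "'v \<Rightarrow> 'v set \<Rightarrow> ('v set \<Rightarrow> real) set" where
  "X_sub dep Vp = {x.
     (\<forall>e\<in>edges (insert dep Vp). 0 \<le> x e \<and> x e \<le> 2)
   \<and> (\<forall>v\<in>Vp. xdelta (insert dep Vp) x v = 2)
   \<and> (\<forall>S\<in>subsets Vp. xE x S \<le> real (card S) - 1)}"

definition X_cvrp :: "'v \<Rightarrow> 'v set \<Rightarrow> nat \<Rightarrow> (nat \<Rightarrow> real) \<Rightarrow> (nat \<Rightarrow> 'v \<Rightarrow> real)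
    \<Rightarrow> real \<Rightarrow> nat \<Rightarrow> ('v set \<Rightarrow> real) set" where
  "X_cvrp dep Vp N p d C k = X_sub dep Vp \<inter> {x.
     xdelta (insert dep Vp) x dep = 2 * real k
   \<and> (\<forall>S\<in>subsets Vp. xE x S \<le> real (card S) - of_int \<lceil>dbar N p d S / C\<rceil>)}"

definition nu :: "'v set \<Rightarrow> nat \<Rightarrow> (nat \<Rightarrow> 'v \<Rightarrow> real) \<Rightarrow> real \<Rightarrow> ('v \<Rightarrow> nat)
    \<Rightarrow> (nat \<Rightarrow> 'v set \<Rightarrow> real) \<Rightarrow> (nat \<Rightarrow> 'v \<Rightarrow> real) \<Rightarrow> real" where
  "nu Vp N d C b \<alpha> \<beta> =
     (\<Sum>\<xi>\<in>{1..N}. \<Sum>S\<in>subsets Vp. \<alpha> \<xi> S * (of_int (kxi C d \<xi> S) - real (card S)))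
   + (\<Sum>\<xi>\<in>{1..N}. \<Sum>v\<in>Vp. \<beta> \<xi> v * real (b v))"

definition inA :: "'v set \<Rightarrow> nat \<Rightarrow> ('v \<Rightarrow> real)
    \<Rightarrow> (nat \<Rightarrow> 'v set \<Rightarrow> real) \<Rightarrow> (nat \<Rightarrow> 'v \<Rightarrow> real) \<Rightarrow> bool" where
  "inA Vp N w \<alpha> \<beta> \<longleftrightarrow>
     (\<forall>\<xi>\<in>{1..N}. \<forall>S\<in>subsets Vp. 0 \<le> \<alpha> \<xi> S)
   \<and> (\<forall>\<xi>\<in>{1..N}. \<forall>v\<in>Vp. \<beta> \<xi> v \<le> 0)
   \<and> (\<forall>\<xi>\<in>{1..N}. \<forall>v\<in>Vp. w v = 0 \<longrightarrow>
        \<beta> \<xi> v + (\<Sum>S\<in>{S\<in>subsets Vp. v \<in> S}. \<alpha> \<xi> S) \<le> 0)"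

definition Gamma :: "'v set \<Rightarrow> nat \<Rightarrow> (nat \<Rightarrow> real) \<Rightarrow> (nat \<Rightarrow> 'v \<Rightarrow> real) \<Rightarrow> real
    \<Rightarrow> ('v \<Rightarrow> real) \<Rightarrow> ('v \<Rightarrow> nat) \<Rightarrow> ('v set \<Rightarrow> real)
    \<Rightarrow> (nat \<Rightarrow> 'v set \<Rightarrow> real) \<Rightarrow> (nat \<Rightarrow> 'v \<Rightarrow> real)
    \<Rightarrow> (('v \<Rightarrow> real) \<times> (nat \<Rightarrow> 'v \<Rightarrow> real)) set" where
  "Gamma Vp N p d C w b xbar \<alpha> \<beta> = {(\<theta>, y).
     (\<forall>v\<in>Vp. 0 \<le> \<theta> v)
   \<and> (\<forall>\<xi>\<in>{1..N}. \<forall>v\<in>Vp. 0 \<le> y \<xi> v \<and> y \<xi> v \<le> real (b v))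
   \<and> (\<Sum>\<xi>\<in>{1..N}. \<Sum>v\<in>Vp. (\<beta> \<xi> v + (\<Sum>S\<in>{S\<in>subsets Vp. v \<in> S}. \<alpha> \<xi> S)) * y \<xi> v)
       \<ge> (\<Sum>\<xi>\<in>{1..N}. \<Sum>S\<in>subsets Vp. \<alpha> \<xi> S * xE xbar S) + nu Vp N d C b \<alpha> \<beta>
   \<and> (\<forall>v\<in>Vp. \<theta> v \<ge> (\<Sum>\<xi>\<in>{1..N}. p \<xi> * w v * y \<xi> v))}"

definition proj_theta :: "('a \<times> 'b) set \<Rightarrow> 'a set" where
  "proj_theta G = {\<theta>. \<exists>y. (\<theta>, y) \<in> G}"

definition SRI_hat :: "'v set \<Rightarrow> nat \<Rightarrow> (nat \<Rightarrow> real) \<Rightarrow> (nat \<Rightarrow> 'v \<Rightarrow> real) \<Rightarrow> real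
    \<Rightarrow> ('v \<Rightarrow> real) \<Rightarrow> ('v \<Rightarrow> nat) \<Rightarrow> ('v set \<Rightarrow> real)
    \<Rightarrow> (('v \<Rightarrow> real) \<times> (nat \<Rightarrow> 'v \<Rightarrow> real)) set" where
  "SRI_hat Vp N p d C w b x = {(\<theta>, y).
     (\<forall>v\<in>Vp. 0 \<le> \<theta> v)
   \<and> (\<forall>\<xi>\<in>{1..N}. \<forall>v\<in>Vp. 0 \<le> y \<xi> v \<and> y \<xi> v \<le> real (b v))
   \<and> (\<forall>S\<in>subsets Vp. \<forall>\<xi>\<in>{1..N}.
        sum (y \<xi>) S \<ge> of_int (kxi C d \<xi> S) + xE x S - real (card S))
   \<and> (\<forall>v\<in>Vp. \<theta> v \<ge> (\<Sum>\<xi>\<in>{1..N}. p \<xi> * w v * y \<xi> v))}"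

definition Pset :: "('v set \<Rightarrow> real) set \<Rightarrow> 'v set \<Rightarrow> nat \<Rightarrow> (nat \<Rightarrow> real) \<Rightarrow> (nat \<Rightarrow> 'v \<Rightarrow> real)
    \<Rightarrow> real \<Rightarrow> ('v \<Rightarrow> real) \<Rightarrow> ('v \<Rightarrow> nat) \<Rightarrow> (('v set \<Rightarrow> real) \<times> ('v \<Rightarrow> real)) set" where
  "Pset X Vp N p d C w b = {(x, \<theta>). x \<in> X \<and> \<theta> \<in> proj_theta (SRI_hat Vp N p d C w b x)}"

definition Lstar_xi :: "'v set \<Rightarrow> (nat \<Rightarrow> 'v \<Rightarrow> real) \<Rightarrow> real \<Rightarrow> ('v \<Rightarrow> real) \<Rightarrow> ('v \<Rightarrow> nat)
    \<Rightarrow> nat \<Rightarrow> 'v set \<Rightarrow> int \<Rightarrow> real" where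
  "Lstar_xi Vp d C w b \<xi> S k' = Inf {(\<Sum>v\<in>Vp. w v * y v) | y.
      sum y S \<ge> of_int (kxi C d \<xi> S - k') \<and> (\<forall>v\<in>Vp. 0 \<le> y v \<and> y v \<le> real (b v))}"

definition Lstar :: "'v set \<Rightarrow> nat \<Rightarrow> (nat \<Rightarrow> real) \<Rightarrow> (nat \<Rightarrow> 'v \<Rightarrow> real) \<Rightarrow> real
    \<Rightarrow> ('v \<Rightarrow> real) \<Rightarrow> ('v \<Rightarrow> nat) \<Rightarrow> 'v set \<Rightarrow> int \<Rightarrow> real" where
  "Lstar Vp N p d C w b S k' = (\<Sum>\<xi>\<in>{1..N}. p \<xi> * Lstar_xi Vp d C w b \<xi> S k')"

(* Construction of the multipliers in the theorem.  ord xi is the chosen ordering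
   v_1..v_l of S (by nondecreasing w) for scenario xi. *)
definition jidx :: "real \<Rightarrow> (nat \<Rightarrow> 'v \<Rightarrow> real) \<Rightarrow> ('v \<Rightarrow> nat) \<Rightarrow> (nat \<Rightarrow> nat \<Rightarrow> 'v)
    \<Rightarrow> 'v set \<Rightarrow> int \<Rightarrow> nat \<Rightarrow> nat" where
  "jidx C d b ord S k' \<xi> = (LEAST j. 1 \<le> j \<and> j \<le> card S
       \<and> kxi C d \<xi> S - k' \<le> (\<Sum>i\<in>{1..j}. int (b (ord \<xi> i))))"

definition alpha_bar :: "real \<Rightarrow> (nat \<Rightarrow> 'v \<Rightarrow> real) \<Rightarrow> ('v \<Rightarrow> real) \<Rightarrow> ('v \<Rightarrow> nat)
    \<Rightarrow> (nat \<Rightarrow> nat \<Rightarrow> 'v) \<Rightarrow> 'v set \<Rightarrow> int \<Rightarrow> nat \<Rightarrow> real" where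
  "alpha_bar C d w b ord S k' \<xi> =
     (if kxi C d \<xi> S > k' then w (ord \<xi> (jidx C d b ord S k' \<xi>)) else 0)"

definition beta_bar :: "real \<Rightarrow> (nat \<Rightarrow> 'v \<Rightarrow> real) \<Rightarrow> ('v \<Rightarrow> real) \<Rightarrow> ('v \<Rightarrow> nat)
    \<Rightarrow> (nat \<Rightarrow> nat \<Rightarrow> 'v) \<Rightarrow> 'v set \<Rightarrow> int \<Rightarrow> nat \<Rightarrow> 'v \<Rightarrow> real" where
  "beta_bar C d w b ord S k' \<xi> v =
     (if v \<in> ord \<xi> ` {1..<jidx C d b ord S k' \<xi>}
      then w v - w (ord \<xi> (jidx C d b ord S k' \<xi>)) else 0)"

definition alpha_hat :: "(nat \<Rightarrow> real) \<Rightarrow> real \<Rightarrow> (nat \<Rightarrow> 'v \<Rightarrow> real) \<Rightarrow> ('v \<Rightarrow> real) \<Rightarrow> ('v \<Rightarrow> nat)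
    \<Rightarrow> (nat \<Rightarrow> nat \<Rightarrow> 'v) \<Rightarrow> 'v set \<Rightarrow> int \<Rightarrow> nat \<Rightarrow> 'v set \<Rightarrow> real" where
  "alpha_hat p C d w b ord S k' \<xi> S' =
     (if S' = S then p \<xi> * alpha_bar C d w b ord S k' \<xi> else 0)"

definition beta_hat :: "(nat \<Rightarrow> real) \<Rightarrow> real \<Rightarrow> (nat \<Rightarrow> 'v \<Rightarrow> real) \<Rightarrow> ('v \<Rightarrow> real) \<Rightarrow> ('v \<Rightarrow> nat)
    \<Rightarrow> (nat \<Rightarrow> nat \<Rightarrow> 'v) \<Rightarrow> 'v set \<Rightarrow> int \<Rightarrow> nat \<Rightarrow> 'v \<Rightarrow> real" where
  "beta_hat p C d w b ord S k' \<xi> v = p \<xi> * beta_bar C d w b ord S k' \<xi> v"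

end

theory Submission imports Defs begin

lemma split3:
  fixes F :: "nat \<Rightarrow> 'a::comm_monoid_add"
  assumes "1 \<le> j" "j \<le> l"
  shows "sum F {1..l} = sum F {1..<j} + F j + sum F {j<..l}"
proof -
  have "{1..l} = {1..<j} \<union> ({j} \<union> {j<..l})" using assms by auto
  then have "sum F {1..l} = sum F {1..<j} + sum F ({j} \<union> {j<..l})"
    by (metis (no_types) sum.union_disjoint finite_atLeastLessThan finite_greaterThanAtMost finite_UnI finite.intros
       Int_emptyI UnE atLeastLessThan_iff greaterThanAtMost_iff singletonD order.strict_iff_not)
  also have "sum F ({j} \<union> {j<..l}) = F j + sum F {j<..l}" by (subst sum.union_disjoint) auto
  finally show ?thesis by (simp add: add.assoc)
qed

lemma perxi:
  fixes S :: "'v set" and Vp and w :: "'v \<Rightarrow> real" and b :: "'v \<Rightarrow> nat"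
    and pi :: "nat \<Rightarrow> 'v" and K :: int and j :: nat and a :: real and bb :: "'v \<Rightarrow> real"
  assumes fin: "finite Vp" and S: "S \<noteq> {}" "S \<subseteq> Vp"
    and w: "\<forall>v\<in>Vp. 0 \<le> w v"
    and hyp: "K \<le> int (sum b S)"
    and bij: "bij_betw pi {1..card S} S"
    and mono: "\<forall>i j. 1 \<le> i \<longrightarrow> i \<le> j \<longrightarrow> j \<le> card S \<longrightarrow> w (pi i) \<le> w (pi j)"
    and jdef: "j = (LEAST j. 1 \<le> j \<and> j \<le> card S \<and> K \<le> (\<Sum>i\<in>{1..j}. int (b (pi i))))"
    and adef: "a = (if K > 0 then w (pi j) else 0)"
    and bbdef: "bb = (\<lambda>v. if v \<in> pi ` {1..<j} then w v - w (pi j) else 0)"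
  shows "1 \<le> j \<and> j \<le> card S \<and> 0 \<le> a \<and> (\<forall>v. bb v \<le> 0) \<and> (\<forall>v. v \<notin> S \<longrightarrow> bb v = 0)
     \<and> (\<forall>v\<in>S. bb v + a \<le> w v)
     \<and> Inf {(\<Sum>v\<in>Vp. w v * y v) | y. sum y S \<ge> of_int K \<and> (\<forall>v\<in>Vp. 0 \<le> y v \<and> y v \<le> real (b v))}
          \<le> a * of_int K + (\<Sum>v\<in>Vp. bb v * real (b v))
     \<and> 0 \<le> Inf {(\<Sum>v\<in>Vp. w v * y v) | y. sum y S \<ge> of_int K \<and> (\<forall>v\<in>Vp. 0 \<le> y v \<and> y v \<le> real (b v))}
     \<and> a \<le> a * of_int K + (\<Sum>v\<in>Vp. bb v * real (b v))"
proof -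
  define l where "l = card S"
  have finS: "finite S" using fin S(2) finite_subset by blast
  have l1: "1 \<le> l" using finS S(1) l_def by (simp add: Suc_leI card_gt_0_iff)
  have reidx: "\<And>f. sum f S = (\<Sum>i\<in>{1..l}. f (pi i))"
    using sum.reindex_bij_betw[OF bij] l_def by metis
  have imS: "pi ` {1..l} = S" using bij l_def by (simp add: bij_betw_def)
  have injo: "inj_on pi {1..l}" using bij l_def by (simp add: bij_betw_def)
  define P where "P = (\<lambda>j. 1 \<le> j \<and> j \<le> l \<and> K \<le> (\<Sum>i\<in>{1..j}. int (b (pi i))))"
  have jP: "j = (LEAST j. P j)" using jdef P_def l_def by simp
  have Pl: "P l" unfolding P_def using l1 hyp reidx[of "\<lambda>v. int (b v)"] by simp
  have Pj: "P j" using LeastI[of P, OF Pl] jP by simp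
  have j1: "1 \<le> j" and jl: "j \<le> l" using Pj P_def by auto
  have notP: "\<And>j'. j' < j \<Longrightarrow> \<not> P j'" using jP not_less_Least by blast
  have "pi j \<in> S" using imS j1 jl by auto
  then have wj: "0 \<le> w (pi j)" using w S(2) by auto
  have a0: "0 \<le> a" using adef wj by simp
  have awj: "a \<le> w (pi j)" using adef wj by simp
  have memiff: "\<And>i. i \<in> {1..l} \<Longrightarrow> (pi i \<in> pi ` {1..<j}) = (i \<in> {1..<j})"
    using injo jl by (intro inj_on_image_mem_iff[OF injo]) auto
  have bbneg: "\<forall>v. bb v \<le> 0"
  proof
    fix v show "bb v \<le> 0"
    proof (cases "v \<in> pi ` {1..<j}")
      case True
      then obtain i where i: "i \<in> {1..<j}" "v = pi i" by auto
      then have "w (pi i) \<le> w (pi j)" using mono jl l_def by auto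
      then show ?thesis using True i bbdef by simp
    qed (simp add: bbdef)
  qed
  have imsub: "pi ` {1..<j} \<subseteq> S" using imS jl by auto
  have bbout: "\<forall>v. v \<notin> S \<longrightarrow> bb v = 0" using imsub bbdef by auto
  have F3: "\<forall>v\<in>S. bb v + a \<le> w v"
  proof
    fix v assume vS: "v \<in> S"
    show "bb v + a \<le> w v"
    proof (cases "v \<in> pi ` {1..<j}")
      case True then show ?thesis using awj bbdef by simp
    next
      case False
      obtain i where i: "i \<in> {1..l}" "v = pi i" using vS imS by auto
      then have "j \<le> i" using False memiff by auto
      then have "w (pi j) \<le> w (pi i)" using mono j1 i l_def by auto
      then show ?thesis using False bbdef awj i by simp
    qed
  qed
  define T where "T = {(\<Sum>v\<in>Vp. w v * y v) | y. sum y S \<ge> of_int K \<and> (\<forall>v\<in>Vp. 0 \<le> y v \<and> y v \<le> real (b v))}"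
  have Tlow: "\<And>t. t \<in> T \<Longrightarrow> 0 \<le> t" unfolding T_def using w
    by (auto intro!: sum_nonneg)
  define D where "D = a * of_int K + (\<Sum>v\<in>Vp. bb v * real (b v))"
  have main: "D \<in> T \<and> a \<le> D"
  proof (cases "K > 0")
    case False
    have "P 1" unfolding P_def using l1 False by (auto intro!: sum_nonneg)
    then have "j \<le> 1" using jP Least_le by metis
    then have "j = 1" using j1 by simp
    then have bb0: "\<forall>v. bb v = 0" using bbdef by simp
    have a00: "a = 0" using False adef by simp
    have "D = 0" using bb0 a00 D_def by simp
    moreover have "(0::real) \<in> T" unfolding T_def using False
      by (auto intro!: exI[of _ "\<lambda>_. 0"])
    ultimately show ?thesis using a00 by simp
  next
    case True
    define sb where "sb = (\<Sum>i\<in>{1..<j}. int (b (pi i)))"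
    define rr where "rr = K - sb"
    have rr1: "1 \<le> rr"
    proof (cases "j = 1")
      case True then show ?thesis using \<open>K > 0\<close> rr_def sb_def by simp
    next
      case False
      then have "\<not> P (j - 1)" using notP j1 by simp
      moreover have "{1..j-1} = {1..<j}" using j1 False by auto
      ultimately have "\<not> K \<le> (\<Sum>i\<in>{1..<j}. int (b (pi i)))"
        using j1 jl False unfolding P_def by auto
      then show ?thesis using rr_def sb_def by simp
    qed
    have "(\<Sum>i\<in>{1..j}. int (b (pi i))) = sb + int (b (pi j))"
      using j1 sb_def by (simp add: atLeastLessThanSuc_atLeastAtMost[symmetric] )
    then have rrb: "rr \<le> int (b (pi j))" using Pj P_def rr_def by simp
    define z where "z = (\<lambda>v. if v \<in> pi ` {1..<j} then real (b v) else if v = pi j then of_int rr else 0)"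
    have zj: "z (pi j) = of_int rr" using memiff[of j] j1 jl z_def by auto
    have zhi: "\<And>i. i \<in> {j<..l} \<Longrightarrow> z (pi i) = 0"
    proof -
      fix i assume i: "i \<in> {j<..l}"
      then have "pi i \<notin> pi ` {1..<j}" using memiff[of i] j1 by auto
      moreover have "i \<in> {1..l}" "j \<in> {1..l}" "i \<noteq> j" using i j1 jl by auto
      then have "pi i \<noteq> pi j" using inj_on_eq_iff[OF injo] by blast
      ultimately show "z (pi i) = 0" using z_def by simp
    qed
    have zlo: "\<And>i. i \<in> {1..<j} \<Longrightarrow> z (pi i) = real (b (pi i))" using z_def by auto
    have zS: "\<forall>v. v \<notin> S \<longrightarrow> z v = 0" using imsub imS j1 jl z_def by auto
    have sumz: "sum z S = of_int K"
    proof -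
      have "sum z S = (\<Sum>i\<in>{1..<j}. z (pi i)) + z (pi j) + (\<Sum>i\<in>{j<..l}. z (pi i))"
        using reidx[of z] split3[OF j1 jl, of "\<lambda>i. z (pi i)"] by simp
      also have "\<dots> = (\<Sum>i\<in>{1..<j}. real (b (pi i))) + of_int rr"
        using zj zhi zlo by simp
      also have "\<dots> = of_int K" using rr_def sb_def by simp
      finally show ?thesis .
    qed
    have wz: "(\<Sum>v\<in>Vp. w v * z v) = (\<Sum>i\<in>{1..<j}. w (pi i) * real (b (pi i))) + w (pi j) * of_int rr"
    proof -
      have "(\<Sum>v\<in>Vp. w v * z v) = (\<Sum>v\<in>S. w v * z v)"
        using sum.mono_neutral_right[OF fin S(2), of "\<lambda>v. w v * z v"] zS by simp
      also have "\<dots> = (\<Sum>i\<in>{1..<j}. w (pi i) * z (pi i)) + w (pi j) * z (pi j) + (\<Sum>i\<in>{j<..l}. w (pi i) * z (pi i))"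
        using reidx[of "\<lambda>v. w v * z v"] split3[OF j1 jl, of "\<lambda>i. w (pi i) * z (pi i)"] by simp
      also have "\<dots> = (\<Sum>i\<in>{1..<j}. w (pi i) * real (b (pi i))) + w (pi j) * of_int rr"
        using zj zhi zlo by simp
      finally show ?thesis .
    qed
    have zb: "\<forall>v\<in>Vp. 0 \<le> z v \<and> z v \<le> real (b v)"
      using rr1 rrb z_def by auto
    have bbsum: "(\<Sum>v\<in>Vp. bb v * real (b v)) = (\<Sum>i\<in>{1..<j}. (w (pi i) - w (pi j)) * real (b (pi i)))"
    proof -
      have "(\<Sum>v\<in>Vp. bb v * real (b v)) = (\<Sum>v\<in>S. bb v * real (b v))"
        using sum.mono_neutral_right[OF fin S(2), of "\<lambda>v. bb v * real (b v)"] bbout by simp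
      also have "\<dots> = (\<Sum>i\<in>{1..l}. bb (pi i) * real (b (pi i)))" using reidx by simp
      also have "\<dots> = (\<Sum>i\<in>{1..<j}. bb (pi i) * real (b (pi i)))"
      proof (rule sum.mono_neutral_right)
        show "\<forall>i\<in>{1..l} - {1..<j}. bb (pi i) * real (b (pi i)) = 0"
        proof
          fix i assume i: "i \<in> {1..l} - {1..<j}"
          then have "pi i \<notin> pi ` {1..<j}" using memiff[of i] by blast
          then show "bb (pi i) * real (b (pi i)) = 0" using bbdef by simp
        qed
      qed (use jl in auto)
      also have "\<dots> = (\<Sum>i\<in>{1..<j}. (w (pi i) - w (pi j)) * real (b (pi i)))"
        using bbdef by (intro sum.cong) auto
      finally show ?thesis .
    qed
    have Deq: "D = (\<Sum>i\<in>{1..<j}. w (pi i) * real (b (pi i))) + w (pi j) * of_int rr"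
    proof -
      have "D = w (pi j) * of_int K + (\<Sum>i\<in>{1..<j}. (w (pi i) - w (pi j)) * real (b (pi i)))"
        using D_def bbsum adef True by simp
      also have "\<dots> = w (pi j) * of_int K + (\<Sum>i\<in>{1..<j}. w (pi i) * real (b (pi i)))
          - w (pi j) * (\<Sum>i\<in>{1..<j}. real (b (pi i)))"
        by (simp add: algebra_simps sum_subtractf sum_distrib_left)
      also have "\<dots> = (\<Sum>i\<in>{1..<j}. w (pi i) * real (b (pi i))) + w (pi j) * of_int rr"
      proof -
        have "real_of_int K = of_int rr + (\<Sum>i\<in>{1..<j}. real (b (pi i)))"
          using rr_def sb_def by simp
        then show ?thesis by (simp add: algebra_simps)
      qed
      finally show ?thesis .
    qed
    have "D \<in> T" unfolding T_def using sumz zb wz Deq by force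
    moreover have "a \<le> D"
    proof -
      have "0 \<le> (\<Sum>i\<in>{1..<j}. w (pi i) * real (b (pi i)))"
      proof (intro sum_nonneg)
        fix i assume "i \<in> {1..<j}"
        then have "pi i \<in> pi ` {1..<j}" by (rule imageI)
        then have "pi i \<in> Vp" using imsub S(2) by blast
        then show "0 \<le> w (pi i) * real (b (pi i))" using w by simp
      qed
      moreover have "w (pi j) * 1 \<le> w (pi j) * of_int rr" using wj rr1 by (intro mult_left_mono) auto
      ultimately show ?thesis using Deq adef True by simp
    qed
    ultimately show ?thesis by simp
  qed
  have bdd: "bdd_below T" using Tlow by (auto simp: bdd_below_def)
  have "Inf T \<le> D" using main bdd cInf_lower by blast
  moreover have "0 \<le> Inf T" using main Tlow by (intro cInf_greatest) auto
  ultimately show ?thesis using j1 jl l_def a0 bbneg bbout F3 main T_def D_def by simp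
qed

theorem theorem4:
  fixes dep :: 'v and Vp :: "'v set" and N :: nat and p :: "nat \<Rightarrow> real"
    and d :: "nat \<Rightarrow> 'v \<Rightarrow> real" and C :: real and X :: "('v set \<Rightarrow> real) set"
    and w :: "'v \<Rightarrow> real" and b :: "'v \<Rightarrow> nat" and S :: "'v set" and k' :: int
    and ord :: "nat \<Rightarrow> nat \<Rightarrow> 'v"
  assumes fin: "finite Vp" and dep: "dep \<notin> Vp"
    and C: "C > 0" "C \<in> \<rat>"
    and d: "\<forall>\<xi>\<in>{1..N}. \<forall>v\<in>Vp. 0 \<le> d \<xi> v \<and> d \<xi> v \<le> C \<and> d \<xi> v \<in> \<rat>"
    and p: "\<forall>\<xi>\<in>{1..N}. 0 \<le> p \<xi>" "(\<Sum>\<xi>\<in>{1..N}. p \<xi>) = 1"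
    and X: "X = X_sub dep Vp \<or> (\<exists>k::nat. k > 0 \<and> X = X_cvrp dep Vp N p d C k)"
    and w: "\<forall>v\<in>Vp. 0 \<le> w v \<and> w v \<in> \<rat>"
    and S: "S \<noteq> {}" "S \<subseteq> Vp"
    and k': "k' > 0"
    and hyp: "\<forall>\<xi>\<in>{1..N}. kxi C d \<xi> S - k' \<le> int (sum b S)"
    and ord: "\<forall>\<xi>\<in>{1..N}. bij_betw (ord \<xi>) {1..card S} S
               \<and> (\<forall>i j. 1 \<le> i \<longrightarrow> i \<le> j \<longrightarrow> j \<le> card S \<longrightarrow> w (ord \<xi> i) \<le> w (ord \<xi> j))"
  shows "inA Vp N w (alpha_hat p C d w b ord S k') (beta_hat p C d w b ord S k')
    \<and> (\<forall>xbar\<in>X. xE xbar S \<le> real (card S) - of_int k' \<longrightarrow>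
         (\<forall>\<theta>\<in>proj_theta (Gamma Vp N p d C w b xbar (alpha_hat p C d w b ord S k') (beta_hat p C d w b ord S k')).
            sum \<theta> S \<ge> Lstar Vp N p d C w b S k' * (1 + xE xbar S - real (card S) + of_int k')))
    \<and> ((\<forall>(x, \<theta>)\<in>Pset X Vp N p d C w b. xE x S \<le> real (card S) - of_int k') \<longrightarrow>
       (\<forall>(x, \<theta>)\<in>Pset X Vp N p d C w b.
            sum \<theta> S \<ge> Lstar Vp N p d C w b S k' * (1 + xE x S - real (card S) + of_int k')))"
proof -
  have finS: "finite S" using fin S(2) finite_subset by blast
  have finsub: "finite (subsets Vp)"
    by (rule finite_subset[of _ "Pow Vp"]) (auto simp: subsets_def fin)
  have Ssub: "S \<in> subsets Vp" using S by (simp add: subsets_def)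
  define a where "a = alpha_bar C d w b ord S k'"
  define bb where "bb = beta_bar C d w b ord S k'"
  define L where "L = (\<lambda>\<xi>. Lstar_xi Vp d C w b \<xi> S k')"
  define D where "D = (\<lambda>\<xi>. a \<xi> * of_int (kxi C d \<xi> S - k') + (\<Sum>v\<in>Vp. bb \<xi> v * real (b v)))"
  define G where "G = (\<lambda>(y::nat \<Rightarrow> 'v \<Rightarrow> real) \<xi>. \<Sum>v\<in>Vp. (bb \<xi> v + (if v \<in> S then a \<xi> else 0)) * y \<xi> v)"
  define RH where "RH = (\<lambda>x \<xi>. a \<xi> * (xE x S + of_int (kxi C d \<xi> S) - real (card S)) + (\<Sum>v\<in>Vp. bb \<xi> v * real (b v)))"
  have w0: "\<forall>v\<in>Vp. 0 \<le> w v" using w by simp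
  have PX: "0 \<le> a \<xi> \<and> (\<forall>v. bb \<xi> v \<le> 0) \<and> (\<forall>v. v \<notin> S \<longrightarrow> bb \<xi> v = 0)
      \<and> (\<forall>v\<in>S. bb \<xi> v + a \<xi> \<le> w v) \<and> L \<xi> \<le> D \<xi> \<and> 0 \<le> L \<xi> \<and> a \<xi> \<le> D \<xi>"
    if \<xi>: "\<xi> \<in> {1..N}" for \<xi>
  proof -
    have h: "kxi C d \<xi> S - k' \<le> int (sum b S)" using hyp \<xi> by simp
    have bij: "bij_betw (ord \<xi>) {1..card S} S" using ord \<xi> by simp
    have mono: "\<forall>i j. 1 \<le> i \<longrightarrow> i \<le> j \<longrightarrow> j \<le> card S \<longrightarrow> w (ord \<xi> i) \<le> w (ord \<xi> j)"
      using ord \<xi> by simp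
    have ad: "a \<xi> = (if kxi C d \<xi> S - k' > 0 then w (ord \<xi> (jidx C d b ord S k' \<xi>)) else 0)"
      unfolding a_def alpha_bar_def by simp
    have bd: "bb \<xi> = (\<lambda>v. if v \<in> ord \<xi> ` {1..<jidx C d b ord S k' \<xi>} then w v - w (ord \<xi> (jidx C d b ord S k' \<xi>)) else 0)"
      unfolding bb_def beta_bar_def by simp
    have jd: "jidx C d b ord S k' \<xi> = (LEAST j. 1 \<le> j \<and> j \<le> card S \<and> kxi C d \<xi> S - k' \<le> (\<Sum>i\<in>{1..j}. int (b (ord \<xi> i))))"
      unfolding jidx_def by simp
    have R: "1 \<le> jidx C d b ord S k' \<xi> \<and> jidx C d b ord S k' \<xi> \<le> card S \<and> 0 \<le> a \<xi> \<and> (\<forall>v. bb \<xi> v \<le> 0) \<and> (\<forall>v. v \<notin> S \<longrightarrow> bb \<xi> v = 0)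
     \<and> (\<forall>v\<in>S. bb \<xi> v + a \<xi> \<le> w v)
     \<and> Inf {(\<Sum>v\<in>Vp. w v * y v) | y. sum y S \<ge> of_int (kxi C d \<xi> S - k') \<and> (\<forall>v\<in>Vp. 0 \<le> y v \<and> y v \<le> real (b v))}
          \<le> a \<xi> * of_int (kxi C d \<xi> S - k') + (\<Sum>v\<in>Vp. bb \<xi> v * real (b v))
     \<and> 0 \<le> Inf {(\<Sum>v\<in>Vp. w v * y v) | y. sum y S \<ge> of_int (kxi C d \<xi> S - k') \<and> (\<forall>v\<in>Vp. 0 \<le> y v \<and> y v \<le> real (b v))}
     \<and> a \<xi> \<le> a \<xi> * of_int (kxi C d \<xi> S - k') + (\<Sum>v\<in>Vp. bb \<xi> v * real (b v))"
      by (rule perxi[OF fin S(1) S(2) w0 h bij mono jd ad bd])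
    show ?thesis using R unfolding L_def D_def Lstar_xi_def by simp
  qed
  have sumA: "(\<Sum>S'\<in>{S'\<in>subsets Vp. v \<in> S'}. alpha_hat p C d w b ord S k' \<xi> S') = (if v \<in> S then p \<xi> * a \<xi> else 0)" for \<xi> v
  proof -
    have fin2: "finite {S'\<in>subsets Vp. v \<in> S'}" using finsub by simp
    have "(\<Sum>S'\<in>{S'\<in>subsets Vp. v \<in> S'}. alpha_hat p C d w b ord S k' \<xi> S')
        = (\<Sum>S'\<in>{S'\<in>subsets Vp. v \<in> S'}. if S' = S then p \<xi> * a \<xi> else 0)"
      unfolding alpha_hat_def a_def by simp
    also have "\<dots> = (if S \<in> {S'\<in>subsets Vp. v \<in> S'} then p \<xi> * a \<xi> else 0)"
      using sum.delta[OF fin2, of S "\<lambda>_. p \<xi> * a \<xi>"] by simp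
    finally show ?thesis using Ssub by simp
  qed
  have sumAf: "(\<Sum>S'\<in>subsets Vp. alpha_hat p C d w b ord S k' \<xi> S' * f S') = p \<xi> * a \<xi> * f S" for \<xi> f
  proof -
    have "(\<Sum>S'\<in>subsets Vp. alpha_hat p C d w b ord S k' \<xi> S' * f S')
        = (\<Sum>S'\<in>subsets Vp. if S' = S then p \<xi> * a \<xi> * f S' else 0)"
      unfolding alpha_hat_def a_def by (intro sum.cong) auto
    also have "\<dots> = p \<xi> * a \<xi> * f S"
      using sum.delta[OF finsub, of S "\<lambda>S'. p \<xi> * a \<xi> * f S'"] Ssub by simp
    finally show ?thesis .
  qed
  have eqL: "(\<Sum>\<xi>\<in>{1..N}. \<Sum>v\<in>Vp. (beta_hat p C d w b ord S k' \<xi> v + (\<Sum>S'\<in>{S'\<in>subsets Vp. v \<in> S'}. alpha_hat p C d w b ord S k' \<xi> S')) * y \<xi> v)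
      = (\<Sum>\<xi>\<in>{1..N}. p \<xi> * G y \<xi>)" for y
    unfolding G_def sumA beta_hat_def bb_def[symmetric] sum_distrib_left
    by (intro sum.cong refl) (auto simp: algebra_simps)
  have eqR: "(\<Sum>\<xi>\<in>{1..N}. \<Sum>S'\<in>subsets Vp. alpha_hat p C d w b ord S k' \<xi> S' * xE x S')
      + nu Vp N d C b (alpha_hat p C d w b ord S k') (beta_hat p C d w b ord S k')
      = (\<Sum>\<xi>\<in>{1..N}. p \<xi> * RH x \<xi>)" for x
    unfolding nu_def sumAf RH_def beta_hat_def bb_def[symmetric]
    apply (simp only: sum.distrib[symmetric])
    apply (intro sum.cong refl)
    apply (simp add: sum_distrib_left algebra_simps)
    done
  have Lst: "Lstar Vp N p d C w b S k' = (\<Sum>\<xi>\<in>{1..N}. p \<xi> * L \<xi>)"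
    unfolding Lstar_def L_def by simp
  have Lnn: "0 \<le> Lstar Vp N p d C w b S k'"
    unfolding Lst using PX p(1) by (intro sum_nonneg) auto
  have key: "sum \<theta> S \<ge> Lstar Vp N p d C w b S k' * (1 + xE x S - real (card S) + of_int k')"
    if \<theta>0: "\<forall>v\<in>Vp. 0 \<le> \<theta> v"
      and yb: "\<forall>\<xi>\<in>{1..N}. \<forall>v\<in>Vp. 0 \<le> y \<xi> v \<and> y \<xi> v \<le> real (b v)"
      and xle: "xE x S \<le> real (card S) - of_int k'"
      and \<theta>y: "\<forall>v\<in>Vp. \<theta> v \<ge> (\<Sum>\<xi>\<in>{1..N}. p \<xi> * w v * y \<xi> v)"
      and con: "(\<Sum>\<xi>\<in>{1..N}. p \<xi> * G y \<xi>) \<ge> (\<Sum>\<xi>\<in>{1..N}. p \<xi> * RH x \<xi>)"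
    for x \<theta> y
  proof -
    define t where "t = 1 + xE x S - real (card S) + of_int k'"
    have t1: "t \<le> 1" using xle t_def by simp
    have th0: "0 \<le> sum \<theta> S" using \<theta>0 S(2) by (intro sum_nonneg) auto
    show ?thesis
    proof (cases "t < 0")
      case True
      then have "Lstar Vp N p d C w b S k' * t \<le> 0" using Lnn by (simp add: mult_nonneg_nonpos)
      then show ?thesis using th0 t_def by simp
    next
      case False
      have s1: "sum \<theta> S \<ge> (\<Sum>v\<in>S. \<Sum>\<xi>\<in>{1..N}. p \<xi> * w v * y \<xi> v)"
        using \<theta>y S(2) by (intro sum_mono) auto
      have s2: "(\<Sum>v\<in>S. \<Sum>\<xi>\<in>{1..N}. p \<xi> * w v * y \<xi> v) = (\<Sum>\<xi>\<in>{1..N}. p \<xi> * (\<Sum>v\<in>S. w v * y \<xi> v))"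
        by (subst sum.swap) (simp add: sum_distrib_left mult.assoc)
      have s3: "G y \<xi> \<le> (\<Sum>v\<in>S. w v * y \<xi> v)" if \<xi>: "\<xi> \<in> {1..N}" for \<xi>
      proof -
        have "G y \<xi> = (\<Sum>v\<in>S. (bb \<xi> v + (if v \<in> S then a \<xi> else 0)) * y \<xi> v)"
          unfolding G_def using PX[OF \<xi>]
          by (intro sum.mono_neutral_right[OF fin S(2)]) auto
        also have "\<dots> \<le> (\<Sum>v\<in>S. w v * y \<xi> v)"
        proof (rule sum_mono)
          fix v assume v: "v \<in> S"
          then have "bb \<xi> v + a \<xi> \<le> w v" using PX[OF \<xi>] by simp
          moreover have "0 \<le> y \<xi> v" using yb \<xi> v S(2) by auto
          ultimately show "(bb \<xi> v + (if v \<in> S then a \<xi> else 0)) * y \<xi> v \<le> w v * y \<xi> v"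
            using v by (simp add: mult_right_mono)
        qed
        finally show ?thesis .
      qed
      have s4: "RH x \<xi> = D \<xi> + a \<xi> * (t - 1)" for \<xi>
        unfolding RH_def D_def t_def by (simp add: algebra_simps)
      have s5: "L \<xi> * t \<le> D \<xi> + a \<xi> * (t - 1)" if \<xi>: "\<xi> \<in> {1..N}" for \<xi>
      proof -
        have "0 \<le> (D \<xi> - a \<xi>) * (1 - t)" using PX[OF \<xi>] t1 by simp
        moreover have "0 \<le> (D \<xi> - L \<xi>) * t" using PX[OF \<xi>] False by simp
        ultimately show ?thesis by (simp add: algebra_simps)
      qed
      have "Lstar Vp N p d C w b S k' * t = (\<Sum>\<xi>\<in>{1..N}. p \<xi> * (L \<xi> * t))"
        unfolding Lst by (simp add: sum_distrib_right mult.assoc)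
      also have "\<dots> \<le> (\<Sum>\<xi>\<in>{1..N}. p \<xi> * RH x \<xi>)"
        using s5 s4 p(1) by (intro sum_mono mult_left_mono) auto
      also have "\<dots> \<le> (\<Sum>\<xi>\<in>{1..N}. p \<xi> * G y \<xi>)" by (rule con)
      also have "\<dots> \<le> (\<Sum>\<xi>\<in>{1..N}. p \<xi> * (\<Sum>v\<in>S. w v * y \<xi> v))"
        using s3 p(1) by (intro sum_mono mult_left_mono) auto
      also have "\<dots> \<le> sum \<theta> S" using s1 s2 by simp
      finally show ?thesis using t_def by simp
    qed
  qed
  have part1: "inA Vp N w (alpha_hat p C d w b ord S k') (beta_hat p C d w b ord S k')"
    unfolding inA_def
  proof (intro conjI ballI impI)
    fix \<xi> S' assume "\<xi> \<in> {1..N}" "S' \<in> subsets Vp"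
    then show "0 \<le> alpha_hat p C d w b ord S k' \<xi> S'"
      using PX p(1) unfolding alpha_hat_def a_def[symmetric] by simp
  next
    fix \<xi> v assume "\<xi> \<in> {1..N}" "v \<in> Vp"
    then show "beta_hat p C d w b ord S k' \<xi> v \<le> 0"
      using PX p(1) unfolding beta_hat_def bb_def[symmetric] by (simp add: mult_nonneg_nonpos)
  next
    fix \<xi> v assume \<xi>: "\<xi> \<in> {1..N}" and v: "v \<in> Vp" and wv: "w v = 0"
    have "bb \<xi> v + (if v \<in> S then a \<xi> else 0) \<le> 0"
      using PX[OF \<xi>] wv by (cases "v \<in> S") auto
    then have "p \<xi> * (bb \<xi> v + (if v \<in> S then a \<xi> else 0)) \<le> 0"
      using p(1) \<xi> by (simp add: mult_nonneg_nonpos)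
    then show "beta_hat p C d w b ord S k' \<xi> v + (\<Sum>S'\<in>{S'\<in>subsets Vp. v \<in> S'}. alpha_hat p C d w b ord S k' \<xi> S') \<le> 0"
      unfolding sumA beta_hat_def bb_def[symmetric] by (simp add: algebra_simps split: if_splits)
  qed
  have part2: "\<forall>xbar\<in>X. xE xbar S \<le> real (card S) - of_int k' \<longrightarrow>
         (\<forall>\<theta>\<in>proj_theta (Gamma Vp N p d C w b xbar (alpha_hat p C d w b ord S k') (beta_hat p C d w b ord S k')).
            sum \<theta> S \<ge> Lstar Vp N p d C w b S k' * (1 + xE xbar S - real (card S) + of_int k'))"
  proof (intro ballI impI)
    fix xbar \<theta> assume xle: "xE xbar S \<le> real (card S) - of_int k'"
      and th: "\<theta> \<in> proj_theta (Gamma Vp N p d C w b xbar (alpha_hat p C d w b ord S k') (beta_hat p C d w b ord S k'))"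
    then obtain y where "(\<theta>, y) \<in> Gamma Vp N p d C w b xbar (alpha_hat p C d w b ord S k') (beta_hat p C d w b ord S k')"
      unfolding proj_theta_def by blast
    then have g: "\<forall>v\<in>Vp. 0 \<le> \<theta> v" "\<forall>\<xi>\<in>{1..N}. \<forall>v\<in>Vp. 0 \<le> y \<xi> v \<and> y \<xi> v \<le> real (b v)"
       "(\<Sum>\<xi>\<in>{1..N}. p \<xi> * G y \<xi>) \<ge> (\<Sum>\<xi>\<in>{1..N}. p \<xi> * RH xbar \<xi>)"
       "\<forall>v\<in>Vp. \<theta> v \<ge> (\<Sum>\<xi>\<in>{1..N}. p \<xi> * w v * y \<xi> v)"
      unfolding Gamma_def eqL eqR[symmetric] by auto
    show "sum \<theta> S \<ge> Lstar Vp N p d C w b S k' * (1 + xE xbar S - real (card S) + of_int k')"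
      by (rule key[OF g(1) g(2) xle g(4) g(3)])
  qed
  have part3: "(\<forall>(x, \<theta>)\<in>Pset X Vp N p d C w b. xE x S \<le> real (card S) - of_int k') \<longrightarrow>
       (\<forall>(x, \<theta>)\<in>Pset X Vp N p d C w b.
            sum \<theta> S \<ge> Lstar Vp N p d C w b S k' * (1 + xE x S - real (card S) + of_int k'))"
  proof (intro impI ballI)
    fix z assume all: "\<forall>(x, \<theta>)\<in>Pset X Vp N p d C w b. xE x S \<le> real (card S) - of_int k'"
      and z: "z \<in> Pset X Vp N p d C w b"
    obtain x \<theta> where z': "z = (x, \<theta>)" by (cases z)
    have xle: "xE x S \<le> real (card S) - of_int k'" using all z z' by auto
    have "\<theta> \<in> proj_theta (SRI_hat Vp N p d C w b x)" using z z' unfolding Pset_def by auto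
    then obtain y where "(\<theta>, y) \<in> SRI_hat Vp N p d C w b x" unfolding proj_theta_def by blast
    then have g: "\<forall>v\<in>Vp. 0 \<le> \<theta> v" "\<forall>\<xi>\<in>{1..N}. \<forall>v\<in>Vp. 0 \<le> y \<xi> v \<and> y \<xi> v \<le> real (b v)"
       "\<forall>\<xi>\<in>{1..N}. sum (y \<xi>) S \<ge> of_int (kxi C d \<xi> S) + xE x S - real (card S)"
       "\<forall>v\<in>Vp. \<theta> v \<ge> (\<Sum>\<xi>\<in>{1..N}. p \<xi> * w v * y \<xi> v)"
      unfolding SRI_hat_def using Ssub by auto
    have con: "(\<Sum>\<xi>\<in>{1..N}. p \<xi> * G y \<xi>) \<ge> (\<Sum>\<xi>\<in>{1..N}. p \<xi> * RH x \<xi>)"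
    proof (intro sum_mono mult_left_mono)
      fix \<xi> assume \<xi>: "\<xi> \<in> {1..N}"
      show "0 \<le> p \<xi>" using p(1) \<xi> by simp
      have Gs: "G y \<xi> = (\<Sum>v\<in>Vp. bb \<xi> v * y \<xi> v) + a \<xi> * sum (y \<xi>) S"
      proof -
        have "(\<Sum>v\<in>Vp. (if v \<in> S then a \<xi> else 0) * y \<xi> v) = (\<Sum>v\<in>Vp. if v \<in> S then a \<xi> * y \<xi> v else 0)"
          by (intro sum.cong) auto
        also have "\<dots> = (\<Sum>v\<in>Vp \<inter> S. a \<xi> * y \<xi> v)" by (rule sum.inter_restrict[OF fin, symmetric])
        also have "\<dots> = a \<xi> * sum (y \<xi>) S" using S(2) by (simp add: Int_absorb1 sum_distrib_left)
        finally show ?thesis unfolding G_def by (simp add: distrib_right sum.distrib)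
      qed
      have "(\<Sum>v\<in>Vp. bb \<xi> v * real (b v)) \<le> (\<Sum>v\<in>Vp. bb \<xi> v * y \<xi> v)"
      proof (rule sum_mono)
        fix v assume "v \<in> Vp"
        then have "y \<xi> v \<le> real (b v)" "bb \<xi> v \<le> 0" using g(2) \<xi> PX[OF \<xi>] by auto
        then show "bb \<xi> v * real (b v) \<le> bb \<xi> v * y \<xi> v" by (rule mult_left_mono_neg)
      qed
      moreover have "a \<xi> * (xE x S + of_int (kxi C d \<xi> S) - real (card S)) \<le> a \<xi> * sum (y \<xi>) S"
      proof (rule mult_left_mono)
        show "xE x S + of_int (kxi C d \<xi> S) - real (card S) \<le> sum (y \<xi>) S"
          using g(3) \<xi> by fastforce
      qed (use PX[OF \<xi>] in simp)
      ultimately show "RH x \<xi> \<le> G y \<xi>" unfolding Gs RH_def by simp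
    qed
    show "case z of (x, \<theta>) \<Rightarrow> sum \<theta> S \<ge> Lstar Vp N p d C w b S k' * (1 + xE x S - real (card S) + of_int k')"
      unfolding z' using key[OF g(1) g(2) xle g(4) con] by simp
  qed
  show ?thesis using part1 part2 part3 by blast
qed

end
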